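(* For all even $m\geq 2$ one has \begin{enumerate} \item $S_m^0\odot \mu = -S_m^0\,\mu$; \item The mapping $(\mathbb{Q}^\mathscr{P},\odot)\to(\mathbb{Q}^\mathscr{P},\odot),\ f\mapsto S_m\,|\, f$ is a derivation, uniquely determined on $\mathcal{T}$ by $S_m\,|\, T_{k,l} = T_{k+m-1,l+1}$. \end{enumerate}
   Context: $\mathscr{P}$ is the set of partitions and $r_m(\lambda)$ the number of parts of $\lambda$ equal to $m$. $S_m(\lambda)=-\frac{B_m}{2m}+\sum_i\lambda_i^{m-1}$ for even $m$, and $S_m^0=S_m-S_m(\emptyset)$. $\mu:\mathscr{P}\to\{-1,0,1\}$ is given by $\mu(\lambda)=(-1)^{\ell(\lambda)}$ if $\lambda$ is strict (no repeated parts) and $0$ otherwise; $S_m^0\mu$ is the pointwise product. The induced product $\odot$ is defined by $\langle f\odot g\rangle_{\vec u}=\langle f\rangle_{\vec u}\langle g\rangle_{\vec u}$ with $\langle f\rangle_{\vec u}=\sum_\lambda f(\lambda)u_{\lambda_1}u_{\lambda_2}\cdots/\sum_\lambda u_{\lambda_1}u_{\lambda_2}\cdots$; equivalently $(f\odot g)(\lambda)=\sum_{\alpha\cup\beta\cup\gamma=\lambda}f(\alpha)g(\beta)\mu(\gamma)$ (multiset unions). The connected product of two functions is $S_m|f=S_mf-S_m\odot f$. The Faulhaber polynomial $F_l$ is the polynomial with zero constant term with $F_l(n)=\sum_{i=1}^n i^{l-1}$ for $n\ge1$; $T_{k,l}(\lambda)=-\frac{B_{k+l}}{2(k+l)}(\delta_{l,1}+\delta_{k,0})+\sum_{m'\ge1}m'^kF_l(r_{m'}(\lambda))$,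 and $\mathcal{T}$ is the algebra generated by the $T_{k,l}$, which has a basis of induced products $T_{k_1,l_1}\odot\cdots\odot T_{k_n,l_n}$. *)

theory Defs
  imports Complex_Main "HOL-Library.Multiset"
begin

text \<open>Partitions are finite multisets of positive integers; a partition
  lambda is the multiset of its parts, so r_m(lambda) = count lambda m.
  Functions on partitions (elements of Q^P) are represented as
  functions nat multiset => rat; only their values on partitions matter.\<close>

definition partitions :: "nat multiset set" where
  "partitions = {lam. 0 \<notin># lam}"

text \<open>Bernoulli numbers (convention B_1 = -1/2), via the standard recursion
  sum_{k=0}^{n} C(n+1,k) B_k = 0 for n >= 1, B_0 = 1.\<close>

fun bernoulli :: "nat \<Rightarrow> rat" where
  "bernoulli n = (if n = 0 then 1 else
     - (\<Sum>k<n. of_nat ((n + 1) choose k) * bernoulli k) / of_nat (n + 1))"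

definition is_strict :: "nat multiset \<Rightarrow> bool" where
  "is_strict lam = (\<forall>x. count lam x \<le> 1)"

definition mu :: "nat multiset \<Rightarrow> rat" where
  "mu lam = (if is_strict lam then (-1) ^ size lam else 0)"

definition odot :: "(nat multiset \<Rightarrow> rat) \<Rightarrow> (nat multiset \<Rightarrow> rat) \<Rightarrow> nat multiset \<Rightarrow> rat"
  (infixl "\<odot>" 70) where
  "(f \<odot> g) lam = (\<Sum>alpha\<in>{alpha. alpha \<subseteq># lam}. \<Sum>beta\<in>{beta. beta \<subseteq># lam - alpha}.
                     f alpha * g beta * mu (lam - alpha - beta))"

definition S :: "nat \<Rightarrow> nat multiset \<Rightarrow> rat" where
  "S m lam = - bernoulli m / (2 * of_nat m) + sum_mset (image_mset (\<lambda>x. of_nat x ^ (m - 1)) lam)"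

definition S0 :: "nat \<Rightarrow> nat multiset \<Rightarrow> rat" where
  "S0 m lam = S m lam - S m {#}"

definition conn :: "nat \<Rightarrow> (nat multiset \<Rightarrow> rat) \<Rightarrow> nat multiset \<Rightarrow> rat" where
  "conn m f = (\<lambda>lam. S m lam * f lam - (S m \<odot> f) lam)"

text \<open>Faulhaber polynomial F_l (l >= 1) evaluated at a natural number n:
  F_l(n) = sum_{i=1}^n i^(l-1) (for n = 0 this is 0, the constant term).\<close>
definition faulhaber :: "nat \<Rightarrow> nat \<Rightarrow> rat" where
  "faulhaber l n = (\<Sum>i=1..n. of_nat i ^ (l - 1))"

text \<open>T_{k,l}; the sum over m' >= 1 reduces to the parts of lambda since F_l(0) = 0.\<close>
definition T :: "nat \<Rightarrow> nat \<Rightarrow> nat multiset \<Rightarrow> rat" where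
  "T k l lam = - bernoulli (k + l) / (2 * of_nat (k + l))
                 * ((if l = 1 then 1 else 0) + (if k = 0 then 1 else 0))
               + (\<Sum>m'\<in>set_mset lam. of_nat m' ^ k * faulhaber l (count lam m'))"

inductive_set Tcal :: "(nat multiset \<Rightarrow> rat) set" where
  const: "(\<lambda>_. c) \<in> Tcal"
| gen: "l \<ge> 1 \<Longrightarrow> T k l \<in> Tcal"
| add: "f \<in> Tcal \<Longrightarrow> g \<in> Tcal \<Longrightarrow> (\<lambda>lam. f lam + g lam) \<in> Tcal"
| smult: "f \<in> Tcal \<Longrightarrow> (\<lambda>lam. c * f lam) \<in> Tcal"
| prod: "f \<in> Tcal \<Longrightarrow> g \<in> Tcal \<Longrightarrow> f \<odot> g \<in> Tcal"

definition is_odot_derivation :: "((nat multiset \<Rightarrow> rat) \<Rightarrow> (nat multiset \<Rightarrow> rat)) \<Rightarrow> bool" where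
  "is_odot_derivation D \<longleftrightarrow>
     (\<forall>a b f g. \<forall>lam\<in>partitions.
        D (\<lambda>x. a * f x + b * g x) lam = a * D f lam + b * D g lam) \<and>
     (\<forall>f g. \<forall>lam\<in>partitions. D (f \<odot> g) lam = (D f \<odot> g) lam + (f \<odot> D g) lam)"

end

theory Submission
  imports Defs "HOL-Library.Function_Algebras"
begin

lemma finite_submsets: "finite {a. a \<subseteq># (M::'a multiset)}"
proof (induction M)
  case empty then show ?case by simp
next
  case (add x M)
  have "{a. a \<subseteq># add_mset x M} \<subseteq> {a. a \<subseteq># M} \<union> add_mset x ` {a. a \<subseteq># M}"
  proof
    fix a assume "a \<in> {a. a \<subseteq># add_mset x M}"
    then have h: "a \<subseteq># add_mset x M" by simp
    show "a \<in> {a. a \<subseteq># M} \<union> add_mset x ` {a. a \<subseteq># M}"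
    proof (cases "x \<in># a")
      case True
      then obtain b where b: "a = add_mset x b" by (metis multi_member_split)
      with h have "b \<subseteq># M" by (simp add: mset_subset_eq_add_mset_cancel)
      with b show ?thesis by blast
    next
      case False
      with h have "a \<subseteq># M" by (metis Diff_eq_empty_iff_mset minus_add_mset_if_not_in_lhs)
      then show ?thesis by blast
    qed
  qed
  then show ?case using add by (meson finite_Un finite_imageI finite_subset)
qed

lemma sub_diff_mono: "a \<subseteq># c \<Longrightarrow> c \<subseteq># (lam::'a multiset) \<Longrightarrow> c - a \<subseteq># lam - a"
  using subset_eq_diff_conv by fastforce
lemma sub_add_le: "a \<subseteq># (lam::'a multiset) \<Longrightarrow> b \<subseteq># lam - a \<Longrightarrow> a + b \<subseteq># lam"
  by (simp add: add.commute subset_mset.le_diff_conv2)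
lemma sub_diff_diff: "a \<subseteq># (lam::'a multiset) \<Longrightarrow> lam - (lam - a) = a"
  by (metis add_diff_cancel_left' subset_mset.diff_add)

definition conv :: "(nat multiset \<Rightarrow> rat) \<Rightarrow> (nat multiset \<Rightarrow> rat) \<Rightarrow> nat multiset \<Rightarrow> rat" where
  "conv f g lam = (\<Sum>a\<in>{a. a \<subseteq># lam}. f a * g (lam - a))"

lemma decomp:
  "(\<Sum>c\<in>{c. c \<subseteq># lam}. \<Sum>a\<in>{a. a \<subseteq># c}. F a (c - a) (lam - c)) =
   (\<Sum>a\<in>{a. a \<subseteq># lam}. \<Sum>b\<in>{b. b \<subseteq># lam - a}. F a b (lam - a - b))"
proof -
  have "(\<Sum>c\<in>{c. c \<subseteq># lam}. \<Sum>a\<in>{a. a \<subseteq># c}. F a (c - a) (lam - c)) =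
     (\<Sum>(c,a)\<in>Sigma {c. c \<subseteq># lam} (\<lambda>c. {a. a \<subseteq># c}). F a (c - a) (lam - c))"
    by (rule sum.Sigma) (auto simp: finite_submsets)
  also have "\<dots> = (\<Sum>(a,b)\<in>Sigma {a. a \<subseteq># lam} (\<lambda>a. {b. b \<subseteq># lam - a}). F a b (lam - a - b))"
  proof (rule sum.reindex_bij_witness[where i = "\<lambda>(a,b). (a + b, a)" and j = "\<lambda>(c,a). (a, c - a)"])
    fix x assume "x \<in> Sigma {c. c \<subseteq># lam} (\<lambda>c. {a. a \<subseteq># c})"
    then obtain c a where x: "x = (c,a)" "c \<subseteq># lam" "a \<subseteq># c" by auto
    show "(case case x of (c, a) \<Rightarrow> (a, c - a) of (a, b) \<Rightarrow> (a + b, a)) = x"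
      using x by auto
    show "(case x of (c, a) \<Rightarrow> (a, c - a)) \<in> Sigma {a. a \<subseteq># lam} (\<lambda>a. {b. b \<subseteq># lam - a})"
      using x by (auto simp: sub_diff_mono intro: subset_mset.order_trans)
    show "(case case x of (c, a) \<Rightarrow> (a, c - a) of (a, b) \<Rightarrow> F a b (lam - a - b)) =
        (case x of (c, a) \<Rightarrow> F a (c - a) (lam - c))"
      using x by (auto simp: subset_mset.diff_add)
  next
    fix y assume "y \<in> Sigma {a. a \<subseteq># lam} (\<lambda>a. {b. b \<subseteq># lam - a})"
    then obtain a b where y: "y = (a,b)" "a \<subseteq># lam" "b \<subseteq># lam - a" by auto
    show "(case case y of (a, b) \<Rightarrow> (a + b, a) of (c, a) \<Rightarrow> (a, c - a)) = y"
      using y by auto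
    show "(case y of (a, b) \<Rightarrow> (a + b, a)) \<in> Sigma {c. c \<subseteq># lam} (\<lambda>c. {a. a \<subseteq># c})"
      using y by (auto simp: sub_add_le)
  qed
  also have "\<dots> = (\<Sum>a\<in>{a. a \<subseteq># lam}. \<Sum>b\<in>{b. b \<subseteq># lam - a}. F a b (lam - a - b))"
    by (rule sum.Sigma[symmetric]) (auto simp: finite_submsets)
  finally show ?thesis .
qed

lemma conv_comm: "conv f g = conv g f"
proof (rule ext)
  fix lam
  show "conv f g lam = conv g f lam"
    unfolding conv_def
    by (rule sum.reindex_bij_witness[where i = "\<lambda>a. lam - a" and j = "\<lambda>a. lam - a"])
       (auto simp: sub_diff_diff mult.commute)
qed

lemma conv_assoc: "conv (conv f g) h = conv f (conv g h)"
proof (rule ext)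
  fix lam
  have "conv (conv f g) h lam = (\<Sum>c\<in>{c. c \<subseteq># lam}. \<Sum>a\<in>{a. a \<subseteq># c}. f a * g (c - a) * h (lam - c))"
    unfolding conv_def by (simp add: sum_distrib_right)
  also have "\<dots> = (\<Sum>a\<in>{a. a \<subseteq># lam}. \<Sum>b\<in>{b. b \<subseteq># lam - a}. f a * g b * h (lam - a - b))"
    by (rule decomp)
  also have "\<dots> = conv f (conv g h) lam"
    unfolding conv_def by (simp add: sum_distrib_left mult.assoc)
  finally show "conv (conv f g) h lam = conv f (conv g h) lam" .
qed

interpretation conv: abel_semigroup conv
  by unfold_locales (rule conv_assoc, rule conv_comm)

lemma conv_add1: "conv (f + g) h = conv f h + conv g h"
  by (rule ext) (simp add: conv_def sum.distrib algebra_simps)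
lemma conv_diff1: "conv (f - g) h = conv f h - conv g h"
  by (rule ext) (simp add: conv_def sum_subtractf algebra_simps)
lemma conv_uminus1: "conv (- f) h = - conv f h"
  by (rule ext) (simp add: conv_def sum_negf)
lemma conv_zero1: "conv 0 h = 0"
  by (rule ext) (simp add: conv_def)
lemma conv_zero2: "conv h 0 = 0"
  by (rule ext) (simp add: conv_def)
lemma conv_add2: "conv h (f + g) = conv h f + conv h g"
  using conv_add1 conv_comm by metis
lemma conv_diff2: "conv h (f - g) = conv h f - conv h g"
  using conv_diff1 conv_comm by metis
lemma conv_uminus2: "conv h (- f) = - conv h f"
  using conv_uminus1 conv_comm by metis
lemma conv_scale1: "conv (\<lambda>x. c * f x) h = (\<lambda>x. c * conv f h x)"
  by (rule ext) (simp add: conv_def sum_distrib_left algebra_simps)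

definition delta :: "nat multiset \<Rightarrow> rat" where
  "delta lam = (if lam = {#} then 1 else 0)"

lemma conv_delta1: "conv delta f = f"
proof (rule ext)
  fix lam
  have "conv delta f lam = (\<Sum>a\<in>{a. a \<subseteq># lam}. if a = {#} then f lam else 0)"
    unfolding conv_def delta_def by (rule sum.cong) auto
  also have "\<dots> = f lam" by (simp add: finite_submsets)
  finally show "conv delta f lam = f lam" .
qed

lemma conv_delta2: "conv f delta = f"
  using conv_delta1 conv_comm by metis

lemma odot_conv: "f \<odot> g = conv (conv f g) mu"
proof (rule ext)
  fix lam
  have "conv (conv f g) mu lam = (\<Sum>c\<in>{c. c \<subseteq># lam}. \<Sum>a\<in>{a. a \<subseteq># c}. f a * g (c - a) * mu (lam - c))"
    unfolding conv_def by (simp add: sum_distrib_right)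
  also have "\<dots> = (\<Sum>a\<in>{a. a \<subseteq># lam}. \<Sum>b\<in>{b. b \<subseteq># lam - a}. f a * g b * mu (lam - a - b))"
    by (rule decomp)
  finally show "(f \<odot> g) lam = conv (conv f g) mu lam" unfolding odot_def by simp
qed

lemma alt_pow: "finite X \<Longrightarrow> (\<Sum>A\<in>Pow X. (-1::rat) ^ card A) = (if X = {} then 1 else 0)"
proof (induction X rule: finite_induct)
  case empty then show ?case by simp
next
  case (insert x X)
  have disj: "Pow X \<inter> insert x ` Pow X = {}" using insert by auto
  have inj: "inj_on (insert x) (Pow X)" using insert by (auto simp: inj_on_def)
  have "(\<Sum>A\<in>Pow (insert x X). (-1::rat) ^ card A) =
      (\<Sum>A\<in>Pow X. (-1::rat) ^ card A) + (\<Sum>A\<in>insert x ` Pow X. (-1::rat) ^ card A)"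
    unfolding Pow_insert using insert disj by (intro sum.union_disjoint) auto
  also have "(\<Sum>A\<in>insert x ` Pow X. (-1::rat) ^ card A) = (\<Sum>A\<in>Pow X. (-1::rat) ^ card (insert x A))"
    using inj by (simp add: sum.reindex)
  also have "\<dots> = (\<Sum>A\<in>Pow X. - ((-1::rat) ^ card A))"
  proof (rule sum.cong)
    fix A assume "A \<in> Pow X"
    then have "finite A" "x \<notin> A" using insert finite_subset by auto
    then show "(-1::rat) ^ card (insert x A) = - ((-1) ^ card A)" by simp
  qed simp
  finally show ?case by (simp add: sum_negf)
qed

lemma strict_mset_set: "is_strict a \<Longrightarrow> mset_set (set_mset a) = a"
  unfolding is_strict_def
  by (rule multiset_eqI) (metis count_eq_zero_iff count_mset_set' finite_set_mset le_neq_implies_less less_one)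

lemma conv_one_mu: "conv 1 mu = delta"
proof (rule ext)
  fix lam :: "nat multiset"
  have "conv 1 mu lam = conv mu 1 lam" by (simp add: conv_comm)
  also have "\<dots> = (\<Sum>a\<in>{a. a \<subseteq># lam}. mu a)" by (simp add: conv_def)
  also have "\<dots> = (\<Sum>a\<in>{a. a \<subseteq># lam \<and> is_strict a}. (-1) ^ size a)"
    by (rule sum.mono_neutral_cong_right) (auto simp: finite_submsets mu_def)
  also have "\<dots> = (\<Sum>A\<in>Pow (set_mset lam). (-1) ^ card A)"
  proof (rule sum.reindex_bij_witness[where i = mset_set and j = set_mset])
    fix a assume "a \<in> {a. a \<subseteq># lam \<and> is_strict a}"
    then show "mset_set (set_mset a) = a" "set_mset a \<in> Pow (set_mset lam)"
      "(-1::rat) ^ card (set_mset a) = (-1) ^ size a"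
      by (auto simp: strict_mset_set dest: set_mset_mono) (metis size_mset_set strict_mset_set)
  next
    fix A assume A: "A \<in> Pow (set_mset lam)"
    then have fin: "finite A" by (meson PowD finite_set_mset finite_subset)
    show "set_mset (mset_set A) = A" using fin by simp
    have "mset_set A \<subseteq># lam"
      unfolding subseteq_mset_def using A fin by (auto simp: count_mset_set') 
    moreover have "is_strict (mset_set A)" unfolding is_strict_def using fin by (simp add: count_mset_set')
    ultimately show "mset_set A \<in> {a. a \<subseteq># lam \<and> is_strict a}" by simp
  qed
  also have "\<dots> = delta lam" by (simp add: alt_pow delta_def)
  finally show "conv 1 mu lam = delta lam" .
qed

lemma S0_eq: "S0 m lam = sum_mset (image_mset (\<lambda>x. of_nat x ^ (m - 1)) lam)"
  by (simp add: S0_def S_def)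

lemma S0_add: "S0 m (a + b) = S0 m a + S0 m b"
  by (simp add: S0_eq)

lemma S0_empty: "S0 m {#} = 0"
  by (simp add: S0_eq)

lemma S0_deriv: "S0 m * conv f g = conv (S0 m * f) g + conv f (S0 m * g)"
proof (rule ext)
  fix lam
  have "(S0 m * conv f g) lam = (\<Sum>a\<in>{a. a \<subseteq># lam}. S0 m lam * (f a * g (lam - a)))"
    by (simp add: conv_def sum_distrib_left)
  also have "\<dots> = (\<Sum>a\<in>{a. a \<subseteq># lam}. S0 m a * f a * g (lam - a) + f a * (S0 m (lam - a) * g (lam - a)))"
  proof (rule sum.cong)
    fix a assume "a \<in> {a. a \<subseteq># lam}"
    then have "S0 m lam = S0 m a + S0 m (lam - a)"
      by (metis S0_add mem_Collect_eq subset_mset.add_diff_inverse)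
    then show "S0 m lam * (f a * g (lam - a)) = S0 m a * f a * g (lam - a) + f a * (S0 m (lam - a) * g (lam - a))"
      by (simp add: algebra_simps)
  qed simp
  also have "\<dots> = (conv (S0 m * f) g + conv f (S0 m * g)) lam"
    by (simp add: conv_def sum.distrib)
  finally show "(S0 m * conv f g) lam = (conv (S0 m * f) g + conv f (S0 m * g)) lam" .
qed

lemma S0_delta: "S0 m * delta = 0"
  by (rule ext) (simp add: delta_def S0_empty)

lemma part1_fun: "S0 m * mu = - conv (conv (S0 m) mu) mu"
proof -
  have "0 = S0 m * conv 1 mu" by (simp add: conv_one_mu S0_delta)
  also have "\<dots> = conv (S0 m) mu + conv 1 (S0 m * mu)" by (simp add: S0_deriv)
  finally have "conv (conv (S0 m) mu + conv 1 (S0 m * mu)) mu = conv 0 mu" by simp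
  then have "conv (conv (S0 m) mu) mu + conv (conv 1 mu) (S0 m * mu) = 0"
    by (simp add: conv_add1 conv_add2 conv_zero1 conv_zero2 conv.assoc conv.commute conv.left_commute)
  then show ?thesis by (simp add: conv_one_mu conv_delta1 eq_neg_iff_add_eq_0 add.commute)
qed

lemma conn_eq: "conn m f = S0 m * f - conv (conv (S0 m) mu) f"
proof -
  define c where "c = S m {#}"
  have Sm: "S m = (\<lambda>x. c * (1::nat multiset \<Rightarrow> rat) x) + S0 m"
    by (rule ext) (simp add: S0_def c_def)
  have "S m \<odot> f = (\<lambda>x. c * conv (conv 1 mu) f x) + conv (conv (S0 m) mu) f"
    unfolding odot_conv Sm conv_add1 conv_scale1
    by (simp add: conv.assoc conv.commute conv.left_commute)
  also have "\<dots> = (\<lambda>x. c * f x) + conv (conv (S0 m) mu) f"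
    by (simp add: conv_one_mu conv_delta1)
  finally have "S m \<odot> f = (\<lambda>x. c * f x) + conv (conv (S0 m) mu) f" .
  then show ?thesis
    unfolding conn_def by (rule_tac ext) (simp add: Sm algebra_simps)
qed

lemma conn_leibniz: "conn m (f \<odot> g) = conn m f \<odot> g + f \<odot> conn m g"
proof -
  define P where "P = conv (S0 m) mu"
  have Pmu: "S0 m * mu = - conv P mu" unfolding P_def by (rule part1_fun)
  have "conn m (f \<odot> g) = S0 m * conv (conv f g) mu - conv P (conv (conv f g) mu)"
    unfolding conn_eq odot_conv P_def by simp
  also have "\<dots> = conv (conv (S0 m * f) g) mu + conv (conv f (S0 m * g)) mu
       - conv (conv f g) (conv P mu) - conv P (conv (conv f g) mu)"
    by (simp add: S0_deriv Pmu conv_add1 conv_uminus2)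
  also have "\<dots> = conn m f \<odot> g + f \<odot> conn m g"
    unfolding conn_eq odot_conv P_def[symmetric]
    by (simp add: conv_add1 conv_add2 conv_diff1 conv_diff2 conv.assoc conv.commute conv.left_commute)
  finally show ?thesis .
qed

definition A :: "nat \<Rightarrow> (nat \<Rightarrow> rat) \<Rightarrow> nat multiset \<Rightarrow> rat" where
  "A n psi lam = (if set_mset lam \<subseteq> {n} then psi (size lam) else 0)"

lemma rep: "set_mset a \<subseteq> {n} \<Longrightarrow> a = replicate_mset (size a) n"
proof (induction a)
  case empty then show ?case by simp
next
  case (add x a) then show ?case by simp
qed

lemma conv_A_one: "conv (A n psi) 1 lam = (\<Sum>r\<le>count lam n. psi r)"
proof -
  have "conv (A n psi) 1 lam = (\<Sum>a\<in>{a. a \<subseteq># lam}. A n psi a)" by (simp add: conv_def)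
  also have "\<dots> = (\<Sum>a\<in>{a. a \<subseteq># lam \<and> set_mset a \<subseteq> {n}}. psi (size a))"
    by (rule sum.mono_neutral_cong_right) (auto simp: finite_submsets A_def)
  also have "\<dots> = (\<Sum>r\<le>count lam n. psi r)"
  proof (rule sum.reindex_bij_witness[where i = "\<lambda>r. replicate_mset r n" and j = size])
    fix a assume a: "a \<in> {a. a \<subseteq># lam \<and> set_mset a \<subseteq> {n}}"
    then have e: "a = replicate_mset (size a) n" using rep by auto
    show "replicate_mset (size a) n = a" using e by simp
    show "size a \<in> {..count lam n}" using a e
      by (metis atMost_iff count_le_replicate_mset_subset_eq mem_Collect_eq)
    show "psi (size a) = psi (size a)" by simp
  next
    fix r assume "r \<in> {..count lam n}"
    then show "size (replicate_mset r n) = r"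
      "replicate_mset r n \<in> {a. a \<subseteq># lam \<and> set_mset a \<subseteq> {n}}"
      by (auto simp flip: count_le_replicate_mset_subset_eq)
  qed
  finally show ?thesis .
qed

lemma S0_A: "S0 m * A n psi = A n (\<lambda>r. of_nat r * of_nat n ^ (m - 1) * psi r)"
proof (rule ext)
  fix lam
  show "(S0 m * A n psi) lam = A n (\<lambda>r. of_nat r * of_nat n ^ (m - 1) * psi r) lam"
  proof (cases "set_mset lam \<subseteq> {n}")
    case True
    then have e: "lam = replicate_mset (size lam) n" by (rule rep)
    have "S0 m lam = of_nat (size lam) * of_nat n ^ (m - 1)"
      by (subst e) (simp add: S0_eq)
    then show ?thesis using True by (simp add: A_def)
  next
    case False then show ?thesis by (simp add: A_def)
  qed
qed

lemma conn_conv1: "conn m (conv a 1) = conv (S0 m * a) 1"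
proof -
  have e: "conv (conv (S0 m) mu) (conv a 1) = conv (conv (S0 m) a) (conv 1 mu)"
    by (simp only: conv.assoc conv.commute conv.left_commute)
  show ?thesis
    unfolding conn_eq e conv_one_mu conv_delta2 S0_deriv
    by (simp add: conv_comm)
qed

definition psi :: "nat \<Rightarrow> nat \<Rightarrow> rat" where
  "psi l r = (if r = 0 then 0 else of_nat r ^ (l - 1))"

definition h :: "nat \<Rightarrow> nat \<Rightarrow> nat multiset \<Rightarrow> rat" where
  "h n l = conv (A n (psi l)) 1"

lemma h_val: "h n l lam = faulhaber l (count lam n)"
proof -
  have "h n l lam = (\<Sum>r\<in>{..count lam n}. psi l r)" by (simp add: h_def conv_A_one)
  also have "\<dots> = (\<Sum>r\<in>{1..count lam n}. psi l r)"
    by (rule sum.mono_neutral_right) (auto simp: psi_def)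
  also have "\<dots> = faulhaber l (count lam n)"
    unfolding faulhaber_def by (rule sum.cong) (auto simp: psi_def)
  finally show ?thesis .
qed

lemma conn_h: assumes "l \<ge> 1" shows "conn m (h n l) = (\<lambda>x. of_nat n ^ (m - 1) * h n (l + 1) x)"
proof -
  have "(\<lambda>r. of_nat r * of_nat n ^ (m - 1) * psi l r) = (\<lambda>r. of_nat n ^ (m - 1) * psi (l + 1) r)"
  proof (rule ext)
    fix r
    show "of_nat r * of_nat n ^ (m - 1) * psi l r = of_nat n ^ (m - 1) * psi (l + 1) r"
      using assms by (cases l) (auto simp: psi_def)
  qed
  moreover have "A n (\<lambda>r. c * psi (l + 1) r) = (\<lambda>x. c * A n (psi (l + 1)) x)" for c
    by (rule ext) (simp add: A_def)
  ultimately show ?thesis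
    unfolding h_def conn_conv1 S0_A by (simp add: conv_scale1)
qed

lemma conn_cong: assumes "\<And>a. a \<subseteq># lam \<Longrightarrow> f a = g a" shows "conn m f lam = conn m g lam"
proof -
  have "conv (conv (S0 m) mu) f lam = conv (conv (S0 m) mu) g lam"
    unfolding conv_def by (rule sum.cong) (auto intro: assms)
  then show ?thesis unfolding conn_eq using assms[of lam] by simp
qed

lemma convP_one: "conv (conv (S0 m) mu) 1 = S0 m"
  by (simp add: conv.assoc conv_comm[of mu 1] conv_one_mu conv_delta2)

lemma conn_lin:
  assumes "finite N"
  shows "conn m (\<lambda>x. c + (\<Sum>n\<in>N. w n * g n x)) lam = (\<Sum>n\<in>N. w n * conn m (g n) lam)"
proof -
  define P where "P = conv (S0 m) mu"
  have "conv P (\<lambda>x. c + (\<Sum>n\<in>N. w n * g n x)) lam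
      = (\<Sum>a\<in>{a. a \<subseteq># lam}. c * P a + (\<Sum>n\<in>N. w n * (P a * g n (lam - a))))"
    unfolding conv_def by (simp add: distrib_left sum_distrib_left algebra_simps)
  also have "\<dots> = c * conv P 1 lam + (\<Sum>n\<in>N. w n * conv P (g n) lam)"
    unfolding conv_def by (simp add: sum.distrib sum_distrib_left sum.swap[of _ N])
  finally have e: "conv P (\<lambda>x. c + (\<Sum>n\<in>N. w n * g n x)) lam = c * S0 m lam + (\<Sum>n\<in>N. w n * conv P (g n) lam)"
    by (simp add: P_def convP_one)
  show ?thesis
    unfolding conn_eq P_def[symmetric] using e
    by (simp add: algebra_simps sum_distrib_left sum_subtractf)
qed

lemma part3:
  assumes "m \<ge> 2" "l \<ge> 1"
  shows "conn m (T k l) lam = T (k + m - 1) (l + 1) lam"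
proof -
  define c0 where "c0 = - bernoulli (k + l) / (2 * of_nat (k + l))
                 * ((if l = 1 then 1 else 0) + (if k = 0 then 1 else 0))"
  have dec: "T k l a = c0 + (\<Sum>n\<in>set_mset lam. of_nat n ^ k * h n l a)" if "a \<subseteq># lam" for a
  proof -
    have "(\<Sum>n\<in>set_mset a. of_nat n ^ k * faulhaber l (count a n)) =
          (\<Sum>n\<in>set_mset lam. of_nat n ^ k * faulhaber l (count a n))"
      by (rule sum.mono_neutral_left) (auto simp: that set_mset_mono faulhaber_def count_eq_zero_iff)
    then show ?thesis by (simp add: T_def c0_def h_val)
  qed
  have "conn m (T k l) lam = conn m (\<lambda>x. c0 + (\<Sum>n\<in>set_mset lam. of_nat n ^ k * h n l x)) lam"
    by (rule conn_cong) (rule dec)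
  also have "\<dots> = (\<Sum>n\<in>set_mset lam. of_nat n ^ k * conn m (h n l) lam)"
    by (rule conn_lin) simp
  also have "\<dots> = (\<Sum>n\<in>set_mset lam. of_nat n ^ (k + m - 1) * faulhaber (l + 1) (count lam n))"
  proof (rule sum.cong)
    fix n
    have e: "k + m - 1 = k + (m - 1)" using assms by simp
    show "of_nat n ^ k * conn m (h n l) lam = of_nat n ^ (k + m - 1) * faulhaber (l + 1) (count lam n)"
    proof -
      have p: "(of_nat n::rat) ^ (k + m - 1) = of_nat n ^ k * of_nat n ^ (m - 1)"
        unfolding e by (rule power_add)
      show ?thesis unfolding p using assms by (simp add: conn_h h_val)
    qed
  qed simp
  also have "\<dots> = T (k + m - 1) (l + 1) lam"
    using assms by (simp add: T_def)
  finally show ?thesis .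
qed

lemma sub_of_diff: "b \<subseteq># lam - a \<Longrightarrow> b \<subseteq># (lam::'a multiset)"
  by (meson diff_subset_eq_self subset_mset.order_trans)

lemma odot_cong1: assumes "\<And>a. a \<subseteq># lam \<Longrightarrow> f a = f' a" shows "(f \<odot> g) lam = (f' \<odot> g) lam"
  unfolding odot_def by (intro sum.cong refl) (auto simp: assms)

lemma odot_cong2: assumes "\<And>a. a \<subseteq># lam \<Longrightarrow> g a = g' a" shows "(f \<odot> g) lam = (f \<odot> g') lam"
  unfolding odot_def
  by (intro sum.cong refl) (simp add: assms sub_of_diff)

lemma part_sub: "lam \<in> partitions \<Longrightarrow> a \<subseteq># lam \<Longrightarrow> a \<in> partitions"
  unfolding partitions_def by (auto dest: set_mset_mono)

lemma odot_one2: "g \<odot> 1 = g"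
  unfolding odot_conv by (simp add: conv.assoc conv_one_mu conv_delta2)
lemma odot_one1: "1 \<odot> g = g"
  unfolding odot_conv by (simp add: conv_comm[of 1 g] conv.assoc conv_one_mu conv_delta2)

lemma conn_linear: "conn m (\<lambda>x. a * f x + b * g x) lam = a * conn m f lam + b * conn m g lam"
  unfolding conn_eq by (simp add: conv_def algebra_simps sum.distrib sum_distrib_left)

theorem lemma5p1p2:
  fixes m :: nat
  assumes "even m" and "m \<ge> 2"
  shows "(\<forall>lam\<in>partitions. (S0 m \<odot> mu) lam = - (S0 m lam * mu lam))
       \<and> is_odot_derivation (conn m)
       \<and> (\<forall>k l. l \<ge> 1 \<longrightarrow> (\<forall>lam\<in>partitions. conn m (T k l) lam = T (k + m - 1) (l + 1) lam))
       \<and> (\<forall>D. is_odot_derivation D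
              \<and> (\<forall>k l. l \<ge> 1 \<longrightarrow> (\<forall>lam\<in>partitions. D (T k l) lam = T (k + m - 1) (l + 1) lam))
              \<longrightarrow> (\<forall>f\<in>Tcal. \<forall>lam\<in>partitions. D f lam = conn m f lam))"
proof (intro conjI allI impI ballI)
  fix lam
  show "(S0 m \<odot> mu) lam = - (S0 m lam * mu lam)"
    using fun_cong[OF part1_fun[of m], of lam] by (simp add: odot_conv)
next
  show der: "is_odot_derivation (conn m)"
    unfolding is_odot_derivation_def
    by (simp add: conn_linear conn_leibniz)
next
  fix k l :: nat and lam assume "1 \<le> l"
  then show "conn m (T k l) lam = T (k + m - 1) (l + 1) lam"
    using part3 assms by simp
next
  fix D f lam
  assume H: "is_odot_derivation D \<and> (\<forall>k l. 1 \<le> l \<longrightarrow> (\<forall>lam\<in>partitions. D (T k l) lam = T (k + m - 1) (l + 1) lam))"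
    and f: "f \<in> Tcal" and lam: "lam \<in> partitions"
  have lin: "\<And>a b f g lam. lam \<in> partitions \<Longrightarrow> D (\<lambda>x. a * f x + b * g x) lam = a * D f lam + b * D g lam"
    and leib: "\<And>f g lam. lam \<in> partitions \<Longrightarrow> D (f \<odot> g) lam = (D f \<odot> g) lam + (f \<odot> D g) lam"
    using H unfolding is_odot_derivation_def by auto
  have genD: "\<And>k l lam. 1 \<le> l \<Longrightarrow> lam \<in> partitions \<Longrightarrow> D (T k l) lam = T (k + m - 1) (l + 1) lam"
    using H by auto
  have D1: "D 1 lam = 0" if "lam \<in> partitions" for lam
  proof -
    have "D 1 lam = D (1 \<odot> 1) lam" by (simp add: odot_one1)
    also have "\<dots> = (D 1 \<odot> 1) lam + (1 \<odot> D 1) lam" using leib that by simp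
    also have "\<dots> = D 1 lam + D 1 lam" by (simp add: odot_one1 odot_one2)
    finally show ?thesis by simp
  qed
  have Dc: "D (\<lambda>_. c) lam = 0" if "lam \<in> partitions" for c lam
  proof -
    have eq: "(\<lambda>x. c * (1::nat multiset \<Rightarrow> rat) x + 0 * (1::nat multiset \<Rightarrow> rat) x) = (\<lambda>_. c)"
      by (rule ext) simp
    have "D (\<lambda>x. c * (1::nat multiset \<Rightarrow> rat) x + 0 * (1::nat multiset \<Rightarrow> rat) x) lam = 0"
      using lin[OF that, of c 1 0 1] D1[OF that] by simp
    then show ?thesis unfolding eq .
  qed
  have connc: "conn m (\<lambda>_. c) lam = 0" for c lam
  proof -
    have eq: "(\<lambda>x. c * (1::nat multiset \<Rightarrow> rat) x + 0 * (1::nat multiset \<Rightarrow> rat) x) = (\<lambda>_. c)"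
      by (rule ext) simp
    have "conn m 1 = 0" unfolding conn_eq by (simp add: convP_one)
    moreover have o: "(\<lambda>x::nat multiset. 1::rat) = 1" by (rule ext) simp
    ultimately have "conn m (\<lambda>x. c * (1::nat multiset \<Rightarrow> rat) x + 0 * (1::nat multiset \<Rightarrow> rat) x) lam = 0"
      unfolding conn_linear by (simp add: o)
    then show ?thesis unfolding eq .
  qed
  from f show "D f lam = conn m f lam" using lam
  proof (induction arbitrary: lam rule: Tcal.induct)
    case (const c)
    then show ?case using Dc connc by simp
  next
    case (gen l k)
    then show ?case using genD part3 assms by simp
  next
    case (add f g)
    have "D (\<lambda>x. 1 * f x + 1 * g x) lam = conn m (\<lambda>x. 1 * f x + 1 * g x) lam"
      using lin[OF add.prems, of 1 f 1 g] add.IH add.prems unfolding conn_linear by simp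
    then show ?case by simp
  next
    case (smult f c)
    have "D (\<lambda>x. c * f x + 0 * f x) lam = conn m (\<lambda>x. c * f x + 0 * f x) lam"
      using lin[OF smult.prems, of c f 0 f] smult.IH smult.prems unfolding conn_linear by simp
    then show ?case by simp
  next
    case (prod f g)
    have "D (f \<odot> g) lam = (D f \<odot> g) lam + (f \<odot> D g) lam" using leib prod.prems by simp
    also have "(D f \<odot> g) lam = (conn m f \<odot> g) lam"
      by (rule odot_cong1) (use prod.IH prod.prems part_sub in blast)
    also have "(f \<odot> D g) lam = (f \<odot> conn m g) lam"
      by (rule odot_cong2) (use prod.IH prod.prems part_sub in blast)
    finally show ?case by (simp add: conn_leibniz)
  qed
qed

end
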